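(* Let $\omega(t)=\sum_{n=0}^\infty t^n\sum_{k=0}^n\binom nk^3$. Then for $|t|$ sufficiently small, \[\omega(t)=\frac{1}{1-2t}\,{}_2F_1\!\left(\frac13,\frac23;1;\frac{27t^2}{(1-2t)^3}\right),\] and for $|p|$ sufficiently small, \[\omega\!\left(\frac{p}{2(1+p)^2}\right)=(1+p)\,\omega\!\left(\frac{p^2}{4(1+p)}\right).\]
   Context: ${}_2F_1$ denotes the Gauss hypergeometric function. *)

theory Defs
  imports "HOL-Analysis.Analysis"
begin

definition franel :: "nat \<Rightarrow> nat" where
  "franel n = (\<Sum>k=0..n. (n choose k) ^ 3)"

definition omega :: "complex \<Rightarrow> complex" where
  "omega t = (\<Sum>n. of_nat (franel n) * t ^ n)"

definition hyp2F1 :: "complex \<Rightarrow> complex \<Rightarrow> complex \<Rightarrow> complex \<Rightarrow> complex" where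
  "hyp2F1 a b c z = (\<Sum>n. pochhammer a n * pochhammer b n / (pochhammer c n * fact n) * z ^ n)"

end

theory Submission
  imports Defs "HOL-Complex_Analysis.Complex_Analysis"
begin

unbundle no vec_syntax
unbundle fps_syntax

definition qf :: "nat \<Rightarrow> nat \<Rightarrow> real" where
  "qf n k = 4*real k^3 - (18*real n+30)*real k^2 + (27*real n^2+93*real n+78)*real k
     - (14*real n^3+74*real n^2+128*real n+72)"

definition Gc :: "nat \<Rightarrow> nat \<Rightarrow> real" where
  "Gc n k = (if k = 0 then 0 else real ((n+1) choose (k-1))^3 * qf n k)"

definition Qp :: "real \<Rightarrow> real \<Rightarrow> real" where
  "Qp x y = 4*y^3 - (18*x+30)*y^2 + (27*x^2+93*x+78)*y - (14*x^3+74*x^2+128*x+72)"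

lemma qf_Qp: "qf n k = Qp (real n) (real k)"
  by (simp add: qf_def Qp_def)

lemma poly_id:
  fixes x y a :: real
  shows "(x+1)*((x+2)^2*((x+1)*(x+2)*a)^3 - (7*x^2+21*x+16)*((x+2-y)*(x+1)*a)^3
     - 8*(x+1)^2*((x+1-y)*(x+2-y)*a)^3)
   = ((x+2-y)*(x+1)*a)^3 * Qp x (y+1) - (y*(x+1)*a)^3 * Qp x y"
  by (simp add: Qp_def power2_eq_square power3_eq_cube) (simp add: algebra_simps)

lemma cert:
  "(real n+1)*((real n+2)^2*real ((n+2) choose k)^3 - (7*real n^2+21*real n+16)*real ((n+1) choose k)^3
     - 8*(real n+1)^2*real (n choose k)^3) = Gc n (k+1) - Gc n k"
proof (cases "k \<le> n+2")
  case False
  then show ?thesis by (simp add: Gc_def binomial_eq_0)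
next
  case True
  define a where "a = real ((n+2) choose k) / ((real n+1)*(real n+2))"
  have b: "real ((n+2) choose k) = (real n+1)*(real n+2)*a"
  proof -
    have nz: "(real n+1)*(real n+2) \<noteq> 0" by (simp add: add_nonneg_eq_0_iff)
    show ?thesis unfolding a_def using nz by simp
  qed
  have e1: "(n+2-k) * ((n+2) choose k) = (n+2) * ((n+1) choose k)"
    using binomial_absorb_comp[of "n+2" k] by simp
  have d1: "real (n+2-k) = real n + 2 - real k" using True by (simp add: of_nat_diff)
  have "(real n+2) * real ((n+1) choose k) = real ((n+2) * ((n+1) choose k))" by (simp add: algebra_simps)
  also have "\<dots> = real ((n+2-k) * ((n+2) choose k))" using e1 by simp
  also have "\<dots> = (real n+2) * ((real n+2-real k)*(real n+1)*a)"
    by (simp only: of_nat_mult d1 b) (simp add: algebra_simps)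
  finally have h1: "real ((n+1) choose k) = (real n+2-real k)*(real n+1)*a"
    by (subst (asm) mult_left_cancel) (auto simp: add_nonneg_eq_0_iff)
  have e2: "(n+1-k) * ((n+1) choose k) = (n+1) * (n choose k)"
    using binomial_absorb_comp[of "n+1" k] by simp
  have h2: "real (n choose k) = (real n+1-real k)*(real n+2-real k)*a"
  proof (cases "k \<le> n+1")
    case True
    have d2: "real (n+1-k) = real n + 1 - real k" using True by (simp add: of_nat_diff)
    have "(real n+1) * real (n choose k) = real ((n+1) * (n choose k))" by (simp add: algebra_simps)
    also have "\<dots> = real ((n+1-k) * ((n+1) choose k))" using e2 by simp
    also have "\<dots> = (real n+1) * ((real n+1-real k)*(real n+2-real k)*a)"
      by (simp only: of_nat_mult d2 h1) (simp add: algebra_simps)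
    finally show ?thesis
      by (subst (asm) mult_left_cancel) (auto simp: add_nonneg_eq_0_iff)
  next
    case False
    then have "k = n+2" using \<open>k \<le> n+2\<close> by simp
    then show ?thesis by (simp add: binomial_eq_0)
  qed
  have g0: "Gc n k = (real k*(real n+1)*a)^3 * qf n k"
  proof (cases k)
    case 0 then show ?thesis by (simp add: Gc_def)
  next
    case (Suc j)
    have e3: "k * ((n+2) choose k) = (n+2) * ((n+1) choose j)"
      using binomial_absorption[of j "n+2"] Suc by simp
    have "(real n+2) * real ((n+1) choose j) = real ((n+2) * ((n+1) choose j))" by (simp add: algebra_simps)
    also have "\<dots> = real (k * ((n+2) choose k))" using e3 by simp
    also have "\<dots> = (real n+2) * (real k*(real n+1)*a)"
      by (simp only: of_nat_mult b) (simp add: algebra_simps)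
    finally have "real ((n+1) choose j) = real k*(real n+1)*a"
      by (subst (asm) mult_left_cancel) (auto simp: add_nonneg_eq_0_iff)
    then show ?thesis using Suc by (simp add: Gc_def)
  qed
  have g1: "Gc n (k+1) = real ((n+1) choose k)^3 * qf n (k+1)"
    by (simp add: Gc_def)
  show ?thesis
    unfolding g0 g1 h2 h1 b qf_Qp using poly_id[where x="real n" and y="real k" and a=a] by (simp add: add.commute)
qed


lemma franel_ext:
  assumes "n \<le> N"
  shows "real (franel n) = (\<Sum>k=0..N. real (n choose k)^3)"
proof -
  have "(\<Sum>k=0..N. real (n choose k)^3) = (\<Sum>k=0..n. real (n choose k)^3) + (\<Sum>k=Suc n..N. real (n choose k)^3)"
    using assms by (subst sum.union_disjoint[symmetric]) (auto intro!: sum.cong)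
  also have "(\<Sum>k=Suc n..N. real (n choose k)^3) = 0"
    by (intro sum.neutral) (auto simp: binomial_eq_0)
  finally show ?thesis by (simp add: franel_def)
qed

lemma franel_rec:
  "(real n+2)^2 * real (franel (n+2)) = (7*real n^2+21*real n+16) * real (franel (n+1))
     + 8*(real n+1)^2 * real (franel n)"
proof -
  have "(\<Sum>k=0..n+2. (real n+1)*((real n+2)^2*real ((n+2) choose k)^3 - (7*real n^2+21*real n+16)*real ((n+1) choose k)^3
     - 8*(real n+1)^2*real (n choose k)^3)) = (\<Sum>k=0..n+2. Gc n (Suc k) - Gc n k)"
    using cert by simp
  also have "\<dots> = Gc n (Suc (Suc (Suc n))) - Gc n 0" by (subst sum_Suc_diff) auto
  also have "\<dots> = 0" by (simp add: Gc_def binomial_eq_0)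
  finally have z: "(\<Sum>k=0..n+2. (real n+1)*((real n+2)^2*real ((n+2) choose k)^3 - (7*real n^2+21*real n+16)*real ((n+1) choose k)^3
     - 8*(real n+1)^2*real (n choose k)^3)) = 0" .
  have "(\<Sum>k=0..n+2. (real n+1)*((real n+2)^2*real ((n+2) choose k)^3 - (7*real n^2+21*real n+16)*real ((n+1) choose k)^3
     - 8*(real n+1)^2*real (n choose k)^3)) = (real n+1)*((real n+2)^2*(\<Sum>k=0..n+2. real ((n+2) choose k)^3)
       - (7*real n^2+21*real n+16)*(\<Sum>k=0..n+2. real ((n+1) choose k)^3) - 8*(real n+1)^2*(\<Sum>k=0..n+2. real (n choose k)^3))"
    by (simp only: sum_distrib_left[symmetric] sum_subtractf)
  also have "\<dots> = (real n+1)*((real n+2)^2*real (franel (n+2)) - (7*real n^2+21*real n+16)*real (franel (n+1))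
     - 8*(real n+1)^2*real (franel n))"
    by (simp only: franel_ext[of "n+2" "n+2", OF order.refl] franel_ext[of "n+1" "n+2"] franel_ext[of n "n+2"] le_add1 add_le_mono order.refl one_le_numeral)
  finally have "(real n+1)*((real n+2)^2*real (franel (n+2)) - (7*real n^2+21*real n+16)*real (franel (n+1))
     - 8*(real n+1)^2*real (franel n)) = 0" using z by simp
  then show ?thesis by (simp add: add_nonneg_eq_0_iff)
qed

definition theta :: "complex fps \<Rightarrow> complex fps" where
  "theta f = fps_X * fps_deriv f"

lemma theta_nth [simp]: "theta f $ n = of_nat n * f $ n"
  by (cases n) (simp_all add: theta_def)

lemma theta_add [simp]: "theta (f + g) = theta f + theta g"
  by (simp add: theta_def algebra_simps)
lemma theta_diff [simp]: "theta (f - g) = theta f - theta g"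
  by (simp add: theta_def algebra_simps)
lemma theta_uminus [simp]: "theta (- f) = - theta f"
  by (simp add: theta_def)
lemma theta_mult [simp]: "theta (f * g) = theta f * g + f * theta g"
  by (simp add: theta_def algebra_simps)
lemma theta_X [simp]: "theta fps_X = fps_X"
  by (simp add: theta_def)
lemma theta_one [simp]: "theta 1 = 0"
  by (simp add: theta_def)
lemma theta_numeral [simp]: "theta (numeral k) = 0"
  by (simp add: theta_def)
lemma theta_const [simp]: "theta (fps_const c) = 0"
  by (simp add: theta_def)

lemma fps_mult_numeral_right_nth [simp]: "(f * numeral c) $ n = f $ n * (numeral c :: complex)"
  by (simp add: fps_numeral_fps_const)

lemma mult_nth_low:
  fixes f g :: "complex fps"
  assumes "\<And>k. k < n \<Longrightarrow> g $ k = 0"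
  shows "(f * g) $ n = f $ 0 * g $ n"
proof -
  have "(f * g) $ n = (\<Sum>i=0..n. f$i * g$(n - i))" by (rule fps_mult_nth)
  also have "\<dots> = (\<Sum>i\<in>{0}. f$i * g$(n - i))"
    by (rule sum.mono_neutral_right) (auto simp: assms)
  finally show ?thesis by simp
qed

lemma ode_unique:
  fixes a b d Z :: "complex fps"
  assumes "a$0 \<noteq> 0" "b$0 = 0" "d$0 = 0" "a*theta(theta Z) + b*theta Z + d*Z = 0" "Z$0 = 0"
  shows "Z = 0"
proof (rule ccontr)
  assume nz: "Z \<noteq> 0"
  define n where "n = subdegree Z"
  have zn: "Z $ n \<noteq> 0" using nz by (simp add: n_def)
  have n0: "n \<noteq> 0" using zn assms(5) by (cases n) auto
  have low: "Z $ k = 0" if "k < n" for k using that by (auto simp: n_def)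
  have "(a*theta(theta Z) + b*theta Z + d*Z) $ n = a$0 * (of_nat n * (of_nat n * Z$n))"
    by (simp add: mult_nth_low low assms(2,3))
  then have "a$0 * (of_nat n * (of_nat n * Z$n)) = 0" using assms(4) by simp
  then show False using zn n0 assms(1) by simp
qed

definition Lop :: "complex fps \<Rightarrow> complex fps" where
  "Lop Y = (1 - 7*fps_X - 8*fps_X*fps_X)*theta(theta Y) - (7*fps_X + 16*fps_X*fps_X)*theta Y
          - (2*fps_X + 8*fps_X*fps_X)*Y"

definition W :: "complex fps" where "W = Abs_fps (\<lambda>n. of_nat (franel n))"

lemma franel_0: "franel 0 = 1" by (simp add: franel_def)
lemma franel_1: "franel (Suc 0) = 2" by (simp add: franel_def)

lemma franel_rec_c:
  "(of_nat n+2)^2 * (of_nat (franel (n+2))::complex) = (7*(of_nat n)^2+21* of_nat n+16) * of_nat (franel (n+1))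
     + 8*(of_nat n+1)^2 * of_nat (franel n)"
proof -
  have "complex_of_real ((real n+2)^2 * real (franel (n+2))) = complex_of_real ((7*real n^2+21*real n+16) * real (franel (n+1))
     + 8*(real n+1)^2 * real (franel n))" using franel_rec by simp
  then show ?thesis by simp
qed

lemma Lop_W: "Lop W = 0"
proof (rule fps_ext)
  fix n
  show "Lop W $ n = 0 $ n"
  proof (cases n)
    case 0 then show ?thesis by (simp add: Lop_def W_def algebra_simps)
  next
    case (Suc m)
    show ?thesis
    proof (cases m)
      case 0 then show ?thesis using Suc by (simp add: Lop_def W_def algebra_simps franel_0 franel_1)
    next
      case (Suc j)
      have r: "(of_nat j+2)^2 * (of_nat (franel (j+2))::complex) = (7*(of_nat j)^2+21* of_nat j+16) * of_nat (franel (j+1))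
         + 8*(of_nat j+1)^2 * of_nat (franel j)" by (rule franel_rec_c)
      show ?thesis using \<open>n = Suc m\<close> Suc r
        by (simp add: Lop_def W_def algebra_simps power2_eq_square)
    qed
  qed
qed

definition H :: "complex fps" where
  "H = Abs_fps (\<lambda>n. pochhammer (1/3) n * pochhammer (2/3) n / (pochhammer 1 n * fact n))"

lemma H_0: "H $ 0 = 1" by (simp add: H_def)

lemma H_Suc0: "H $ Suc m = H $ m * ((1/3 + of_nat m) * (2/3 + of_nat m) / ((of_nat m + 1) * (of_nat m + 1)))"
proof -
  have "pochhammer (1::complex) m \<noteq> 0" by (simp add: pochhammer_fact[symmetric])
  moreover have "(fact m :: complex) \<noteq> 0" by simp
  ultimately show ?thesis
    by (simp add: H_def pochhammer_Suc field_simps)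
qed

lemma H_Suc: "9 * ((1 + of_nat m) * (1 + of_nat m)) * H $ Suc m = H $ m * ((1 + 3 * of_nat m) * (2 + 3 * of_nat m))"
proof -
  have nz: "(of_nat m + 1) \<noteq> (0::complex)"
    by (metis of_nat_Suc of_nat_eq_0_iff nat.distinct(1) add.commute)
  have "9 * ((1 + of_nat m) * (1 + of_nat m)) * H $ Suc m = H $ m * (9 * ((1/3 + of_nat m) * (2/3 + of_nat m)))"
    unfolding H_Suc0 using nz by (simp add: add.commute)
  also have "9 * ((1/3 + of_nat m) * (2/3 + of_nat m)) = ((1 + 3 * of_nat m) * (2 + 3 * of_nat m) :: complex)"
    by algebra
  finally show ?thesis .
qed

definition Hop :: "complex fps \<Rightarrow> complex fps" where
  "Hop F = (1 - fps_X)*theta(theta F) - fps_X*theta F - fps_X*(fps_const (2/9)*F)"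

lemma Hop_H: "Hop H = 0"
proof (rule fps_ext)
  fix n
  show "Hop H $ n = 0 $ n"
  proof (cases n)
    case 0 then show ?thesis by (simp add: Hop_def)
  next
    case (Suc m)
    have "1 + of_nat m \<noteq> (0::complex)"
      by (metis of_nat_Suc of_nat_eq_0_iff nat.distinct(1))
    have e: "(1 + of_nat m) * ((1 + of_nat m) * H $ Suc m) * 9 = H $ m * ((1 + 3 * of_nat m) * (2 + 3 * of_nat m))"
      using H_Suc[of m] by (simp add: algebra_simps)
    have "Hop H $ Suc m = 0" using \<open>1 + of_nat m \<noteq> (0::complex)\<close>
      apply (simp add: Hop_def left_diff_distrib)
      apply (simp add: field_simps)
      using H_Suc[of m] by algebra
    then show ?thesis using Suc by simp
  qed
qed

lemma theta_compose:
  assumes "G $ 0 = 0"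
  shows "G * theta (F oo G) = fps_X * fps_deriv G * (theta F oo G)"
  by (simp add: theta_def fps_compose_deriv fps_compose_mult_distrib assms algebra_simps)

lemma div_mult_cancel_fps:
  fixes f g :: "complex fps"
  assumes "g $ 0 \<noteq> 0" shows "f / g * g = f"
  using assms by (simp add: fps_divide_unit inverse_mult_eq_1 mult.assoc)

lemma fps_const_num [simp]: "fps_const (numeral k :: complex) = numeral k"
  by (simp add: fps_numeral_fps_const)

definition Zf :: "complex fps" where "Zf = 27*fps_X^2 / (1 - 2*fps_X)^3"
definition Rf :: "complex fps" where "Rf = (H oo Zf) / (1 - 2*fps_X)"

lemma Zf_0: "Zf $ 0 = 0"
  by (simp add: Zf_def fps_divide_unit)

lemma Zf_rel: "Zf * (1 - 2*fps_X)^3 = 27*fps_X^2"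
  unfolding Zf_def by (rule div_mult_cancel_fps) simp

lemma Rf_rel: "Rf * (1 - 2*fps_X) = H oo Zf"
  unfolding Rf_def by (rule div_mult_cancel_fps) simp

lemma Zf_deriv: "fps_deriv Zf * (1 - 2*fps_X)^3 - 6 * Zf * (1 - 2*fps_X)^2 = 54*fps_X"
proof -
  have "fps_deriv (Zf * (1 - 2*fps_X)^3) = fps_deriv (27*fps_X^2 :: complex fps)"
    using Zf_rel by simp
  then show ?thesis
    by (simp add: fps_deriv_power algebra_simps)
qed


lemma X_ne0: "(fps_X :: complex fps) \<noteq> 0" by (simp add: fps_eq_iff)

lemma cancel_X2:
  fixes A B :: "complex fps"
  assumes "27*fps_X^2 * (A - B) = 0" shows "A = B"
  using assms X_ne0 by simp

lemma Zf_theta: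
  fixes F :: "complex fps"
  shows "(1 - 2*fps_X) * theta (F oo Zf) = 2*(1 + fps_X) * (theta F oo Zf)"
proof -
  define B where "B = theta F oo Zf"
  define T where "T = theta (F oo Zf)"
  have t: "Zf * T = fps_X * fps_deriv Zf * B"
    unfolding T_def B_def by (rule theta_compose[OF Zf_0])
  have "27*fps_X^2 * ((1 - 2*fps_X) * T - 2*(1 + fps_X) * B) = 0"
    using t Zf_rel Zf_deriv by algebra
  then show ?thesis unfolding T_def B_def by (rule cancel_X2)
qed

lemma fps_const_29: "fps_const (2/9) * 9 = (2 :: complex fps)"
proof -
  have "fps_const (2/9) * 9 = fps_const (2/9) * (fps_const 9 :: complex fps)" by simp
  also have "\<dots> = fps_const 2" by (simp only: fps_const_mult) simp
  finally show ?thesis by simp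
qed

lemma Lop_Rf: "Lop Rf = 0"
proof -
  define B0 where "B0 = H oo Zf"
  define B1 where "B1 = theta H oo Zf"
  define B2 where "B2 = theta (theta H) oo Zf"
  define X :: "complex fps" where "X = fps_X"
  define E :: "complex fps" where "E = 1 - 2*X"
  have hyp: "(1 - Zf)*B2 - Zf*B1 - Zf*(fps_const (2/9)*B0) = 0"
  proof -
    have "Hop H oo Zf = 0" by (simp add: Hop_H)
    then show ?thesis
      by (simp add: Hop_def B0_def B1_def B2_def fps_compose_sub_distrib fps_compose_mult_distrib[OF Zf_0] Zf_0)
  qed
  have hyp9: "9*(1 - Zf)*B2 - 9*Zf*B1 - 2*Zf*B0 = 0"
  proof -
    have "9*(1 - Zf)*B2 - 9*Zf*B1 - 2*Zf*B0 = 9*((1 - Zf)*B2 - Zf*B1 - Zf*(fps_const (2/9)*B0))"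
      by (simp add: algebra_simps fps_const_29[symmetric])
    then show ?thesis using hyp by simp
  qed
  have zr: "Zf * E^3 - 27*X^2 = 0" using Zf_rel unfolding E_def X_def by simp
  have c0: "E * theta B0 - 2*(1 + X) * B1 = 0"
    unfolding B0_def B1_def E_def X_def using Zf_theta by simp
  have c1: "E * theta B1 - 2*(1 + X) * B2 = 0"
    unfolding B1_def B2_def E_def X_def using Zf_theta by simp
  have e0': "Rf * E = B0" unfolding B0_def E_def X_def by (rule Rf_rel)
  have e0: "Rf * E - B0 = 0" using e0' by simp
  have e1': "theta Rf * E - 2 * (Rf * X) = theta B0"
    using arg_cong[OF e0', of theta] unfolding E_def X_def by (simp add: algebra_simps)
  have e1: "theta Rf * E - 2 * (Rf * X) - theta B0 = 0" using e1' by simp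
  have e2': "theta (theta Rf) * E - 2 * (theta Rf * X) - 2 * (theta Rf * X) - 2 * (Rf * X) = theta (theta B0)"
    using arg_cong[OF e1', of theta] unfolding E_def X_def by (simp add: algebra_simps)
  have e2: "theta (theta Rf) * E - 2 * (theta Rf * X) - 2 * (theta Rf * X) - 2 * (Rf * X) - theta (theta B0) = 0"
    using e2' by simp
  have c0'': "theta B0 * (- 2*X) + E * theta (theta B0) = 2*X * B1 + 2*(1 + X) * theta B1"
  proof -
    have "E * theta B0 = 2*(1 + X) * B1" using c0 by simp
    from arg_cong[OF this, of theta] show ?thesis unfolding E_def X_def by (simp add: algebra_simps)
  qed
  have c0': "theta B0 * (- 2*X) + E * theta (theta B0) - (2*X * B1 + 2*(1 + X) * theta B1) = 0"
    using c0'' by simp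
  have f1: "E^2 * theta Rf - (2*X*B0 + 2*(1+X)*B1) = 0"
  proof -
    have "E^2 * theta Rf - (2*X*B0 + 2*(1+X)*B1) =
      E * (theta Rf * E - 2 * (Rf * X) - theta B0) + (E * theta B0 - 2*(1 + X) * B1) + 2*X*(Rf * E - B0)"
      by algebra
    also have "\<dots> = 0" unfolding e1 c0 e0 by simp
    finally show ?thesis .
  qed
  have f2: "E^3 * theta (theta Rf) - ((2*X+4*X^2)*B0 + (14*X+8*X^2)*B1 + 4*(1+X)^2*B2) = 0"
  proof -
    have "E^3 * theta (theta Rf) - ((2*X+4*X^2)*B0 + (14*X+8*X^2)*B1 + 4*(1+X)^2*B2) =
      E^2 * (theta (theta Rf) * E - 2 * (theta Rf * X) - 2 * (theta Rf * X) - 2 * (Rf * X) - theta (theta B0))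
      + 4*X*(E^2 * theta Rf - (2*X*B0 + 2*(1+X)*B1)) + 2*X*E*(Rf * E - B0)
      + E * (theta B0 * (- 2*X) + E * theta (theta B0) - (2*X * B1 + 2*(1 + X) * theta B1))
      + 2*X*(E * theta B0 - 2*(1 + X) * B1) + 2*(1+X)*(E * theta B1 - 2*(1 + X) * B2)"
      unfolding E_def by algebra
    also have "\<dots> = 0" unfolding e2 f1 e0 c0' c0 c1 by simp
    finally show ?thesis .
  qed
  have f3: "9*(((1 - 2*X)^3 - 27*X^2)*B2 - 27*X^2*B1 - 6*X^2*B0) = 0"
  proof -
    have "9*(((1 - 2*X)^3 - 27*X^2)*B2 - 27*X^2*B1 - 6*X^2*B0) =
       E^3 * (9*(1 - Zf)*B2 - 9*Zf*B1 - 2*Zf*B0) + (Zf * E^3 - 27*X^2) * (9*B2 + 9*B1 + 2*B0)"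
      unfolding E_def by algebra
    also have "\<dots> = 0" unfolding hyp9 zr by simp
    finally show ?thesis .
  qed
  have "9 * E^3 * Lop Rf - 4*(1+X) * (9*(((1 - 2*X)^3 - 27*X^2)*B2 - 27*X^2*B1 - 6*X^2*B0)) =
     9 * ((1 - 7*X - 8*X*X) * (E^3 * theta (theta Rf) - ((2*X+4*X^2)*B0 + (14*X+8*X^2)*B1 + 4*(1+X)^2*B2))
      - (7*X + 16*X*X) * E * (E^2 * theta Rf - (2*X*B0 + 2*(1+X)*B1)) - (2*X + 8*X*X) * E^2 * (Rf * E - B0))"
    unfolding Lop_def E_def X_def by algebra
  also have "\<dots> = 0" unfolding f1 f2 e0 by simp
  finally have "9 * E^3 * Lop Rf - 4*(1+X) * (9*(((1 - 2*X)^3 - 27*X^2)*B2 - 27*X^2*B1 - 6*X^2*B0)) = 0" .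
  then have z: "9 * E^3 * Lop Rf = 0" unfolding f3 by simp
  moreover have "9 * E^3 \<noteq> (0 :: complex fps)"
  proof
    assume "9 * E^3 = (0 :: complex fps)"
    then have "(9 * E^3) $ 0 = (0::complex)" by simp
    then show False unfolding E_def X_def by (simp add: fps_nth_power_0)
  qed
  ultimately show ?thesis by simp
qed

lemma W_eq_Rf: "W = Rf"
proof -
  have "W - Rf = 0"
  proof (rule ode_unique[of "1 - 7*fps_X - 8*fps_X*fps_X" "- (7*fps_X + 16*fps_X*fps_X)" "- (2*fps_X + 8*fps_X*fps_X)"])
    show "(1 - 7*fps_X - 8*fps_X*fps_X) $ 0 \<noteq> (0::complex)" by simp
    show "(- (7*fps_X + 16*fps_X*fps_X)) $ 0 = (0::complex)" by simp
    show "(- (2*fps_X + 8*fps_X*fps_X)) $ 0 = (0::complex)" by simp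
    have "(1 - 7*fps_X - 8*fps_X*fps_X) * theta (theta (W - Rf)) + - (7*fps_X + 16*fps_X*fps_X) * theta (W - Rf)
        + - (2*fps_X + 8*fps_X*fps_X) * (W - Rf) = Lop W - Lop Rf"
      unfolding Lop_def by (simp add: algebra_simps)
    then show "(1 - 7*fps_X - 8*fps_X*fps_X) * theta (theta (W - Rf)) + - (7*fps_X + 16*fps_X*fps_X) * theta (W - Rf)
        + - (2*fps_X + 8*fps_X*fps_X) * (W - Rf) = 0"
      by (simp add: Lop_W Lop_Rf)
    have "Rf $ 0 = 1"
      by (simp add: Rf_def fps_divide_unit H_0)
    then show "(W - Rf) $ 0 = 0" by (simp add: W_def franel_0)
  qed
  then show ?thesis by simp
qed

definition Uf :: "complex fps" where "Uf = fps_X / (2*(1 + fps_X)^2)"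
definition Vf :: "complex fps" where "Vf = fps_X^2 / (4*(1 + fps_X))"

lemma Uf_0: "Uf $ 0 = 0" by (simp add: Uf_def fps_divide_unit)
lemma Vf_0: "Vf $ 0 = 0" by (simp add: Vf_def fps_divide_unit)

lemma Uf_rel: "Uf * (2*(1 + fps_X)^2) = fps_X"
  unfolding Uf_def by (rule div_mult_cancel_fps) simp
lemma Vf_rel: "Vf * (4*(1 + fps_X)) = fps_X^2"
  unfolding Vf_def by (rule div_mult_cancel_fps) simp

lemma Uf_theta:
  fixes F :: "complex fps"
  shows "(1 + fps_X) * theta (F oo Uf) = (1 - fps_X) * (theta F oo Uf)"
proof -
  define X :: "complex fps" where "X = fps_X"
  define B where "B = theta F oo Uf"
  define T where "T = theta (F oo Uf)"
  define U' where "U' = fps_deriv Uf"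
  have r3: "Uf * T - X * U' * B = 0"
    unfolding T_def B_def U'_def X_def using theta_compose[OF Uf_0, of F] by simp
  have r1: "2*(1+X)^2*Uf - X = 0" using Uf_rel unfolding X_def by (simp add: algebra_simps)
  have r2: "2*(1+X)^2*U' + 4*(1+X)*Uf - 1 = 0"
  proof -
    have "fps_deriv (Uf * (2*(1 + fps_X)^2)) = fps_deriv (fps_X :: complex fps)" using Uf_rel by simp
    then show ?thesis unfolding U'_def X_def by (simp add: fps_deriv_power algebra_simps)
  qed
  have "X * ((1+X)*T - (1-X)*B) = 2*(1+X)^3 * (Uf * T - X * U' * B) - (2*(1+X)^2*Uf - X)*((1+X)*T + 2*X*B)
      + X*(1+X)*B*(2*(1+X)^2*U' + 4*(1+X)*Uf - 1)"
    by algebra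
  also have "\<dots> = 0" unfolding r1 r2 r3 by simp
  finally have "X * ((1+X)*T - (1-X)*B) = 0" .
  then show ?thesis unfolding X_def T_def B_def using X_ne0 by simp
qed

lemma Vf_theta:
  fixes F :: "complex fps"
  shows "(1 + fps_X) * theta (F oo Vf) = (2 + fps_X) * (theta F oo Vf)"
proof -
  define X :: "complex fps" where "X = fps_X"
  define B where "B = theta F oo Vf"
  define T where "T = theta (F oo Vf)"
  define V' where "V' = fps_deriv Vf"
  have r3: "Vf * T - X * V' * B = 0"
    unfolding T_def B_def V'_def X_def using theta_compose[OF Vf_0, of F] by simp
  have r1: "4*(1+X)*Vf - X^2 = 0" using Vf_rel unfolding X_def by (simp add: algebra_simps)
  have r2: "4*Vf + 4*(1+X)*V' - 2*X = 0"
  proof -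
    have "fps_deriv (Vf * (4*(1 + fps_X))) = fps_deriv (fps_X^2 :: complex fps)" using Vf_rel by simp
    then show ?thesis unfolding V'_def X_def by (simp add: fps_deriv_power algebra_simps)
  qed
  have "X^2 * ((1+X)*T - (2+X)*B) = 4*(1+X)^2 * (Vf * T - X * V' * B) - (4*(1+X)*Vf - X^2)*((1+X)*T + X*B)
      + X*(1+X)*B*(4*Vf + 4*(1+X)*V' - 2*X)"
    by algebra
  also have "\<dots> = 0" unfolding r1 r2 r3 by simp
  finally have "X^2 * ((1+X)*T - (2+X)*B) = 0" .
  then show ?thesis unfolding X_def T_def B_def using X_ne0 by simp
qed

lemma Lop_compose:
  assumes "G $ 0 = 0"
  shows "(1 - 7*G - 8*G*G)*(theta (theta W) oo G) - (7*G + 16*G*G)*(theta W oo G) - (2*G + 8*G*G)*(W oo G) = 0"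
proof -
  have "Lop W oo G = 0" by (simp add: Lop_W)
  then show ?thesis
    by (simp add: Lop_def fps_compose_sub_distrib fps_compose_add_distrib fps_compose_mult_distrib[OF assms] assms)
qed

definition Mop :: "complex fps \<Rightarrow> complex fps" where
  "Mop Y = ((2 + 5*fps_X + 2*fps_X^2)*(1+fps_X)^2*(1-fps_X)) * theta (theta Y)
     + (- (3*fps_X + 12*fps_X^2 + 3*fps_X^3)*(1+fps_X)) * theta Y
     + (- 2*fps_X*(1 + 4*fps_X + fps_X^2)*(1-fps_X)) * Y"


lemma Mop_diff: "Mop (f - g) = Mop f - Mop g"
  unfolding Mop_def theta_diff by (simp only: right_diff_distrib) (simp add: algebra_simps)

lemma Mop_Y1: "Mop (W oo Uf) = 0"
proof -
  define A0 where "A0 = W oo Uf"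
  define A1 where "A1 = theta W oo Uf"
  define A2 where "A2 = theta (theta W) oo Uf"
  have g1e: "(1+fps_X) * theta A0 = (1-fps_X) * A1" unfolding A0_def A1_def by (rule Uf_theta)
  have g1: "(1+fps_X) * theta A0 - (1-fps_X) * A1 = 0" using g1e by simp
  have g3: "(1+fps_X) * theta A1 - (1-fps_X) * A2 = 0" unfolding A1_def A2_def using Uf_theta[of "theta W"] by simp
  have g2: "fps_X * theta A0 + (1+fps_X) * theta (theta A0) - (- fps_X * A1 + (1-fps_X) * theta A1) = 0"
    using arg_cong[OF g1e, of theta] by (simp add: algebra_simps)
  have ode: "(1 - 7*Uf - 8*Uf*Uf)*A2 - (7*Uf + 16*Uf*Uf)*A1 - (2*Uf + 8*Uf*Uf)*A0 = 0"
    unfolding A0_def A1_def A2_def by (rule Lop_compose[OF Uf_0])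
  have r1: "2*(1+fps_X)^2*Uf - fps_X = 0" using Uf_rel by (simp add: algebra_simps)
  have "2*(1+fps_X)^2 * Mop A0 = (1-fps_X)*(1+fps_X)^2*(4*(1+fps_X)^4*((1 - 7*Uf - 8*Uf*Uf)*A2 - (7*Uf + 16*Uf*Uf)*A1 - (2*Uf + 8*Uf*Uf)*A0)
       + (2*(1+fps_X)^2*Uf - fps_X) * (14*(1+fps_X)^2*(A2+A1) + 4*(1+fps_X)^2*A0 + (2*(1+fps_X)^2*Uf + fps_X)*(8*A2+16*A1+8*A0)))
     + 2*((2 + 5*fps_X + 2*fps_X^2)*(1+fps_X)^2*(1-fps_X)) * ((1+fps_X)*(fps_X * theta A0 + (1+fps_X) * theta (theta A0) - (- fps_X * A1 + (1-fps_X) * theta A1))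
          - fps_X*((1+fps_X) * theta A0 - (1-fps_X) * A1) + (1-fps_X)*((1+fps_X) * theta A1 - (1-fps_X) * A2))
     + 2*(- (3*fps_X + 12*fps_X^2 + 3*fps_X^3)*(1+fps_X))*(1+fps_X)*((1+fps_X) * theta A0 - (1-fps_X) * A1)"
    unfolding Mop_def by algebra
  also have "\<dots> = 0" unfolding ode r1 g1 g2 g3 by simp
  finally have "2*(1+fps_X)^2 * Mop A0 = 0" .
  moreover have "2*(1+fps_X)^2 \<noteq> (0::complex fps)"
  proof
    assume "2*(1+fps_X)^2 = (0::complex fps)"
    then have "(2*(1+fps_X)^2) $ 0 = (0::complex)" by simp
    then show False by (simp add: fps_nth_power_0)
  qed
  ultimately show ?thesis unfolding A0_def by simp
qed

lemma Mop_Y2: "Mop ((1+fps_X) * (W oo Vf)) = 0"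
proof -
  define B0 where "B0 = W oo Vf"
  define B1 where "B1 = theta W oo Vf"
  define B2 where "B2 = theta (theta W) oo Vf"
  have k1e: "(1+fps_X) * theta B0 = (2+fps_X) * B1" unfolding B0_def B1_def by (rule Vf_theta)
  have k1: "(1+fps_X) * theta B0 - (2+fps_X) * B1 = 0" using k1e by simp
  have k3: "(1+fps_X) * theta B1 - (2+fps_X) * B2 = 0" unfolding B1_def B2_def using Vf_theta[of "theta W"] by simp
  have k2: "fps_X * theta B0 + (1+fps_X) * theta (theta B0) - (fps_X * B1 + (2+fps_X) * theta B1) = 0"
    using arg_cong[OF k1e, of theta] by (simp add: algebra_simps)
  have ode: "(1 - 7*Vf - 8*Vf*Vf)*B2 - (7*Vf + 16*Vf*Vf)*B1 - (2*Vf + 8*Vf*Vf)*B0 = 0"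
    unfolding B0_def B1_def B2_def by (rule Lop_compose[OF Vf_0])
  have r1: "4*(1+fps_X)*Vf - fps_X^2 = 0" using Vf_rel by (simp add: algebra_simps)
  have ty: "theta ((1+fps_X) * B0) = fps_X * B0 + (1+fps_X) * theta B0" by (simp add: algebra_simps)
  have tty: "theta (fps_X * B0 + (1+fps_X) * theta B0) = fps_X * B0 + 2 * fps_X * theta B0 + (1+fps_X) * theta (theta B0)"
    by (simp add: algebra_simps)
  have "4*(1+fps_X)^3 * Mop ((1+fps_X) * B0) = (2+fps_X)*(1+fps_X)^4*(16*(1+fps_X)^2*((1 - 7*Vf - 8*Vf*Vf)*B2 - (7*Vf + 16*Vf*Vf)*B1 - (2*Vf + 8*Vf*Vf)*B0)
       + (4*(1+fps_X)*Vf - fps_X^2) * (28*(1+fps_X)*(B2+B1) + 8*(1+fps_X)*B0 + (4*(1+fps_X)*Vf + fps_X^2)*(8*B2+16*B1+8*B0)))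
     + 4*(((2 + 5*fps_X + 2*fps_X^2)*(1+fps_X)^2*(1-fps_X)) * (2*fps_X*(1+fps_X)^2*((1+fps_X) * theta B0 - (2+fps_X) * B1)
          + (1+fps_X)^2*((2+fps_X)*((1+fps_X) * theta B1 - (2+fps_X) * B2) - fps_X*((1+fps_X) * theta B0 - (2+fps_X) * B1)
             + (1+fps_X)*(fps_X * theta B0 + (1+fps_X) * theta (theta B0) - (fps_X * B1 + (2+fps_X) * theta B1))))
       + (- (3*fps_X + 12*fps_X^2 + 3*fps_X^3)*(1+fps_X))*(1+fps_X)^3*((1+fps_X) * theta B0 - (2+fps_X) * B1))"
    unfolding Mop_def ty tty by algebra
  also have "\<dots> = 0" unfolding ode r1 k1 k2 k3 by simp
  finally have "4*(1+fps_X)^3 * Mop ((1+fps_X) * B0) = 0" .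
  moreover have "4*(1+fps_X)^3 \<noteq> (0::complex fps)"
  proof
    assume "4*(1+fps_X)^3 = (0::complex fps)"
    then have "(4*(1+fps_X)^3) $ 0 = (0::complex)" by simp
    then show False by (simp add: fps_nth_power_0)
  qed
  ultimately show ?thesis unfolding B0_def by simp
qed

lemma fps_identity2: "W oo Uf = (1+fps_X) * (W oo Vf)"
proof -
  define a :: "complex fps" where "a = (2 + 5*fps_X + 2*fps_X^2)*(1+fps_X)^2*(1-fps_X)"
  define b :: "complex fps" where "b = - (3*fps_X + 12*fps_X^2 + 3*fps_X^3)*(1+fps_X)"
  define d :: "complex fps" where "d = - 2*fps_X*(1 + 4*fps_X + fps_X^2)*(1-fps_X)"
  have "(W oo Uf) - (1+fps_X) * (W oo Vf) = 0"
  proof (rule ode_unique[of a b d])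
    show "a $ 0 \<noteq> 0" by (simp add: a_def fps_nth_power_0)
    show "b $ 0 = 0" by (simp add: b_def)
    show "d $ 0 = 0" by (simp add: d_def)
    have "a * theta (theta ((W oo Uf) - (1+fps_X) * (W oo Vf))) + b * theta ((W oo Uf) - (1+fps_X) * (W oo Vf))
        + d * ((W oo Uf) - (1+fps_X) * (W oo Vf)) = Mop ((W oo Uf) - (1+fps_X) * (W oo Vf))"
      unfolding Mop_def a_def b_def d_def by (rule refl)
    also have "\<dots> = Mop (W oo Uf) - Mop ((1+fps_X) * (W oo Vf))"
      by (rule Mop_diff)
    finally show "a * theta (theta ((W oo Uf) - (1+fps_X) * (W oo Vf))) + b * theta ((W oo Uf) - (1+fps_X) * (W oo Vf))
        + d * ((W oo Uf) - (1+fps_X) * (W oo Vf)) = 0" by (simp add: Mop_Y1 Mop_Y2)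
    show "((W oo Uf) - (1+fps_X) * (W oo Vf)) $ 0 = 0" by simp
  qed
  then show ?thesis by simp
qed

lemma franel_le: "franel n \<le> 8^n"
proof -
  have "franel n = (\<Sum>k\<le>n. (n choose k)^3)" by (simp add: franel_def atLeast0AtMost)
  also have "\<dots> \<le> (\<Sum>k\<le>n. (n choose k) * 4^n)"
  proof (rule sum_mono)
    fix k
    have "(n choose k)^2 \<le> (2^n)^2" by (rule power_mono[OF binomial_le_pow2]) simp
    moreover have "((2::nat)^n)^2 = 4^n"
    proof -
      have "((2::nat)^n)^2 = (2^2)^n" by (simp only: power_mult[symmetric] mult.commute)
      then show ?thesis by simp
    qed
    ultimately have "(n choose k)^2 \<le> 4^n" by simp
    then have "(n choose k) * (n choose k)^2 \<le> (n choose k) * 4^n" by simp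
    then show "(n choose k)^3 \<le> (n choose k) * 4^n" by (simp add: power3_eq_cube power2_eq_square)
  qed
  also have "\<dots> = 2^n * 4^n" by (simp add: sum_distrib_right[symmetric] choose_row_sum)
  also have "\<dots> = 8^n" by (simp add: power_mult_distrib[symmetric])
  finally show ?thesis .
qed

lemma summable_omega:
  fixes t :: complex assumes "norm t < 1/8"
  shows "summable (\<lambda>n. of_nat (franel n) * t ^ n)"
proof (rule summable_comparison_test')
  show "summable (\<lambda>n. (8 * norm t)^n)" by (rule summable_geometric) (use assms in simp)
  fix n :: nat
  have "norm (of_nat (franel n) * t ^ n) = real (franel n) * norm t ^ n" by (simp add: norm_mult norm_power)
  also have "\<dots> \<le> 8^n * norm t ^ n"
    by (rule mult_right_mono) (use franel_le[of n] in \<open>simp_all add: of_nat_le_iff[symmetric]\<close>)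
  also have "\<dots> = (8 * norm t)^n" by (simp add: power_mult_distrib)
  finally show "norm (of_nat (franel n) * t ^ n) \<le> (8 * norm t)^n" .
qed

lemma omega_exp: "omega has_fps_expansion W"
proof (rule has_fps_expansionI)
  have "eventually (\<lambda>u. u \<in> ball 0 (1/8)) (nhds (0::complex))"
    by (intro eventually_nhds_in_open) auto
  then show "eventually (\<lambda>u. (\<lambda>n. W $ n * u ^ n) sums omega u) (nhds 0)"
  proof (rule eventually_mono)
    fix u :: complex assume "u \<in> ball 0 (1/8)"
    then have "norm u < 1/8" by simp
    from summable_sums[OF summable_omega[OF this]] show "(\<lambda>n. W $ n * u ^ n) sums omega u"
      by (simp add: W_def omega_def)
  qed
qed

lemma H_bound: "norm (H $ n) \<le> 1"
proof (induction n)
  case 0 then show ?case by (simp add: H_0)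
next
  case (Suc m)
  define r where "r = (1/3 + real m) * (2/3 + real m) / ((real m + 1) * (real m + 1))"
  have fr: "((1/3 + of_nat m) * (2/3 + of_nat m) / ((of_nat m + 1) * (of_nat m + 1)) :: complex) = of_real r"
    by (simp add: r_def)
  have r0: "0 \<le> r" unfolding r_def by simp
  have r1: "r \<le> 1" unfolding r_def
    by (subst divide_le_eq_1) (auto simp: algebra_simps add_pos_nonneg)
  have "norm (H $ Suc m) = norm (H $ m) * r" unfolding H_Suc0 fr using r0 by (simp add: norm_mult)
  also have "\<dots> \<le> 1 * 1" by (rule mult_mono) (use Suc r0 r1 in auto)
  finally show ?case by simp
qed

lemma hyp_exp: "(\<lambda>z. hyp2F1 (1/3) (2/3) 1 z) has_fps_expansion H"
proof (rule has_fps_expansionI)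
  have "eventually (\<lambda>u. u \<in> ball 0 1) (nhds (0::complex))"
    by (intro eventually_nhds_in_open) auto
  then show "eventually (\<lambda>u. (\<lambda>n. H $ n * u ^ n) sums hyp2F1 (1/3) (2/3) 1 u) (nhds 0)"
  proof (rule eventually_mono)
    fix u :: complex assume "u \<in> ball 0 1"
    then have u: "norm u < 1" by simp
    have "summable (\<lambda>n. H $ n * u ^ n)"
    proof (rule summable_comparison_test')
      show "summable (\<lambda>n. norm u ^ n)" by (rule summable_geometric) (use u in simp)
      fix n :: nat
      have "norm (H $ n * u ^ n) = norm (H $ n) * norm u ^ n" by (simp add: norm_mult norm_power)
      also have "\<dots> \<le> 1 * norm u ^ n" by (rule mult_right_mono) (use H_bound in auto)
      finally show "norm (H $ n * u ^ n) \<le> norm u ^ n" by simp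
    qed
    from summable_sums[OF this] show "(\<lambda>n. H $ n * u ^ n) sums hyp2F1 (1/3) (2/3) 1 u"
      by (simp add: H_def hyp2F1_def)
  qed
qed

lemma same_exp_eventually:
  assumes "f has_fps_expansion F" "g has_fps_expansion F"
  shows "eventually (\<lambda>z. f z = g z) (nhds 0)"
proof -
  have "eventually (\<lambda>z. eval_fps F z = f z) (nhds 0)" "eventually (\<lambda>z. eval_fps F z = g z) (nhds 0)"
    using assms by (auto simp: has_fps_expansion_def)
  then show ?thesis by eventually_elim simp
qed

lemma g_exp: "(\<lambda>t. 27 * t^2 / (1 - 2*t)^3) has_fps_expansion Zf"
  unfolding Zf_def
  by (intro has_fps_expansion_divide' has_fps_expansion_mult has_fps_expansion_power has_fps_expansion_diff
        has_fps_expansion_numeral has_fps_expansion_fps_X has_fps_expansion_fps_X_power has_fps_expansion_1)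
     (simp add: fps_nth_power_0)

lemma f1_exp: "(\<lambda>t. 1 / (1 - 2 * t) * hyp2F1 (1/3) (2/3) 1 (27 * t^2 / (1 - 2 * t) ^ 3)) has_fps_expansion W"
proof -
  have c: "(\<lambda>t. hyp2F1 (1/3) (2/3) 1 (27 * t^2 / (1 - 2*t)^3)) has_fps_expansion (H oo Zf)"
    using has_fps_expansion_compose[OF hyp_exp g_exp Zf_0] by (simp add: o_def)
  have i: "(\<lambda>t::complex. 1 / (1 - 2 * t)) has_fps_expansion (1 / (1 - 2*fps_X))"
    by (intro has_fps_expansion_divide' has_fps_expansion_mult has_fps_expansion_diff
        has_fps_expansion_numeral has_fps_expansion_fps_X has_fps_expansion_1) simp
  have "(\<lambda>t. 1 / (1 - 2 * t) * hyp2F1 (1/3) (2/3) 1 (27 * t^2 / (1 - 2 * t) ^ 3)) has_fps_expansion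
         (1 / (1 - 2*fps_X)) * (H oo Zf)"
    by (rule has_fps_expansion_mult[OF i c])
  also have "(1 / (1 - 2*fps_X)) * (H oo Zf) = Rf"
    by (simp add: Rf_def fps_divide_unit)
  finally show ?thesis by (simp add: W_eq_Rf)
qed

lemma u_exp: "(\<lambda>p. p / (2 * (1 + p)^2)) has_fps_expansion Uf"
  unfolding Uf_def
  by (intro has_fps_expansion_divide' has_fps_expansion_mult has_fps_expansion_power has_fps_expansion_add
        has_fps_expansion_numeral has_fps_expansion_fps_X has_fps_expansion_1)
     (simp add: fps_nth_power_0)

lemma v_exp: "(\<lambda>p. p^2 / (4 * (1 + p))) has_fps_expansion Vf"
  unfolding Vf_def
  by (intro has_fps_expansion_divide' has_fps_expansion_mult has_fps_expansion_add
        has_fps_expansion_numeral has_fps_expansion_fps_X has_fps_expansion_fps_X_power has_fps_expansion_1)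
     simp

lemma id2_eventually:
  "eventually (\<lambda>p. omega (p / (2 * (1 + p)^2)) = (1 + p) * omega (p^2 / (4 * (1 + p)))) (nhds 0)"
proof -
  have a: "(\<lambda>p. omega (p / (2 * (1 + p)^2))) has_fps_expansion (W oo Uf)"
    using has_fps_expansion_compose[OF omega_exp u_exp Uf_0] by (simp add: o_def)
  have b0: "(\<lambda>p. omega (p^2 / (4 * (1 + p)))) has_fps_expansion (W oo Vf)"
    using has_fps_expansion_compose[OF omega_exp v_exp Vf_0] by (simp add: o_def)
  have b: "(\<lambda>p. (1 + p) * omega (p^2 / (4 * (1 + p)))) has_fps_expansion ((1 + fps_X) * (W oo Vf))"
    by (intro has_fps_expansion_mult has_fps_expansion_add has_fps_expansion_1 has_fps_expansion_fps_X b0)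
  show ?thesis
    by (rule same_exp_eventually[OF a]) (use b fps_identity2 in simp)
qed

lemma id1_eventually:
  "eventually (\<lambda>t. omega t = 1 / (1 - 2 * t) * hyp2F1 (1/3) (2/3) 1 (27 * t^2 / (1 - 2 * t) ^ 3)) (nhds 0)"
  by (rule same_exp_eventually[OF omega_exp f1_exp])

theorem mainTheorem13:
  shows "(\<exists>\<epsilon>>0. \<forall>t::complex. norm t < \<epsilon> \<longrightarrow>
            summable (\<lambda>n. of_nat (franel n) * t ^ n) \<and>
            omega t = 1 / (1 - 2 * t) *
              hyp2F1 (1/3) (2/3) 1 (27 * t^2 / (1 - 2 * t) ^ 3))
       \<and> (\<exists>\<epsilon>>0. \<forall>p::complex. norm p < \<epsilon> \<longrightarrow>
            omega (p / (2 * (1 + p)^2)) = (1 + p) * omega (p^2 / (4 * (1 + p))))"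
proof
  obtain e1 where e1: "e1 > 0" and h1: "\<forall>t::complex. dist t 0 < e1 \<longrightarrow>
      omega t = 1 / (1 - 2 * t) * hyp2F1 (1/3) (2/3) 1 (27 * t^2 / (1 - 2 * t) ^ 3)"
    using id1_eventually unfolding eventually_nhds_metric by blast
  show "\<exists>\<epsilon>>0. \<forall>t::complex. norm t < \<epsilon> \<longrightarrow>
            summable (\<lambda>n. of_nat (franel n) * t ^ n) \<and>
            omega t = 1 / (1 - 2 * t) *
              hyp2F1 (1/3) (2/3) 1 (27 * t^2 / (1 - 2 * t) ^ 3)"
  proof (intro exI[of _ "min e1 (1/8)"] conjI allI impI)
    show "min e1 (1/8) > 0" using e1 by simp
    fix t :: complex assume t: "norm t < min e1 (1/8)"
    show "summable (\<lambda>n. of_nat (franel n) * t ^ n)" using t by (intro summable_omega) simp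
    show "omega t = 1 / (1 - 2 * t) * hyp2F1 (1/3) (2/3) 1 (27 * t^2 / (1 - 2 * t) ^ 3)"
      using h1 t by (simp add: dist_norm)
  qed
next
  obtain e2 where e2: "e2 > 0" and h2: "\<forall>p::complex. dist p 0 < e2 \<longrightarrow>
      omega (p / (2 * (1 + p)^2)) = (1 + p) * omega (p^2 / (4 * (1 + p)))"
    using id2_eventually unfolding eventually_nhds_metric by blast
  show "\<exists>\<epsilon>>0. \<forall>p::complex. norm p < \<epsilon> \<longrightarrow>
            omega (p / (2 * (1 + p)^2)) = (1 + p) * omega (p^2 / (4 * (1 + p)))"
    using e2 h2 by (auto simp: dist_norm)
qed

end
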